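(* Consider a repeater chain in the model described in the context with $M+N+1$ nodes labelled $1,\dots,M+N+1$ and elementary-link fidelity $F$. Suppose nodes $1,\dots,M$ are at fixed locations with fixed distances between consecutive ones, nodes $M$ and $M+N+1$ are a distance $L$ apart, and the $N$ repeater nodes $M+1,\dots,M+N$ are placed along a straight line between them. Let $\ell_i\ge0$ be the distance between nodes $M+i-1$ and $M+i$ for $i=1,\dots,N+1$, with $\sum_i\ell_i=L$. Suppose nodes $1,\dots,M-1$ have memory coherence time $T$, while nodes $M,M+1,\dots,M+N+1$ have perfect quantum memory. Then the secret-key rate $\mathrm{SKR}$ of the chain, as a function of $(\ell_1,\dots,\ell_{N+1})$, is maximal when $\ell_i=L/(N+1)$ for all $i$.
   Context: Repeater-chain model (swap-ASAP, synchronized attempts). Edge $j$ connects nodes $j$ and $j+1$ and has length $l_j\ge0$ (km). Entanglement generation proceeds in synchronized rounds of duration $t_{\mathrm{att}}=\frac1c\max_jl_j$, $c=200{,}000$ km/s. In each round, each edge not yet successful attempts, succeeding independently with probability $p_j=10^{-\alpha l_j/10}$, $\alpha=0.2\ \mathrm{km}^{-1}$; the number of rounds $X_j$ until edge $j$ succeeds is geometric on $\{1,2,\dots\}$ with parameter $p_j$, independently across edges. Edge $j$ completes at time $t_j=t_{\mathrm{att}}X_j$, and the chain completes at $T_{\mathrm{done}}=t_{\mathrm{att}}\max_jX_j$; the entangling rate is $R=1/\mathbb E[T_{\mathrm{done}}]$. Each successful edge produces the two-qubit Werner state $W_{w_0}=w_0|\phi^+\rangle\langle\phi^+|+(1-w_0)\mathbb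 1/4$ with $w_0=(4F-1)/3$. Each repeater node (every node other than the two end nodes) performs entanglement swapping as soon as both of its links exist; meanwhile a stored qubit $k$ held for time $t$ in a memory with coherence time $T$ undergoes $\rho\mapsto e^{-t/T}\rho+(1-e^{-t/T})\frac{\mathbb 1_2}{2}\otimes\mathrm{Tr}_k\rho$; a node with perfect memory undergoes no such noise, and end nodes measure immediately and suffer no memory noise. Consequently, given the completion times, the end-to-end state is the Werner state with parameter $w_{e2e}=w_0^{K}\prod_{i}e^{-|t_i-t_{i-1}|/T}$, where $K$ is the number of edges and the product is over repeater nodes $i$ with imperfect memory (node $i$ sitting between edges $i-1$ and $i$); the delivered state (not conditioned on completion times) is the Werner state with parameter $\mathbb E[w_{e2e}]$. Its quantum bit error rates are $Q_X=Q_Z=(1-\mathbb E[w_{e2e}])/2$, the secret-key fraction is $\mathrm{SKF}=\max(0,1-h(Q_X)-h(Q_Z))$ with $h(x)=-x\log_2x-(1-x)\log_2(1-x)$, and the secret-key rate is $\mathrm{SKR}=R\cdot\mathrm{SKF}$. *)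

theory Defs
  imports "HOL-Probability.Probability"
begin

text \<open>Physical constants: speed of light in fibre (km/s) and attenuation (1/km).\<close>
definition c_fib :: real where "c_fib = 200000"
definition alpha_att :: real where "alpha_att = 0.2"

definition p_succ :: "real \<Rightarrow> real" where
  "p_succ l = 10 powr (- alpha_att * l / 10)"

text \<open>A chain has K edges, numbered 1..K; edge j connects nodes j and j+1 and has
  length len j.  Synchronized round duration.\<close>
definition t_att :: "nat \<Rightarrow> (nat \<Rightarrow> real) \<Rightarrow> real" where
  "t_att K len = Max (len ` {1..K}) / c_fib"

definition rounds_dist :: "nat \<Rightarrow> (nat \<Rightarrow> real) \<Rightarrow> (nat \<Rightarrow> nat) pmf" where
  "rounds_dist K len =
     Pi_pmf {1..K} 0 (\<lambda>j. map_pmf Suc (geometric_pmf (p_succ (len j))))"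

definition E_T_done :: "nat \<Rightarrow> (nat \<Rightarrow> real) \<Rightarrow> real" where
  "E_T_done K len = t_att K len *
     measure_pmf.expectation (rounds_dist K len) (\<lambda>X. real (Max (X ` {1..K})))"

definition ent_rate :: "nat \<Rightarrow> (nat \<Rightarrow> real) \<Rightarrow> real" where
  "ent_rate K len = 1 / E_T_done K len"

definition w0 :: "real \<Rightarrow> real" where "w0 F = (4 * F - 1) / 3"

text \<open>Expected end-to-end Werner parameter E[w_e2e]; S is the set of repeater nodes with
  imperfect memory (coherence time T); node i sits between edges i-1 and i, and
  t_i = t_att * X_i.\<close>
definition E_w_e2e :: "nat \<Rightarrow> (nat \<Rightarrow> real) \<Rightarrow> real \<Rightarrow> real \<Rightarrow> nat set \<Rightarrow> real" where
  "E_w_e2e K len F T S =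
     measure_pmf.expectation (rounds_dist K len)
       (\<lambda>X. w0 F ^ K * (\<Prod>i\<in>S. exp (- \<bar>t_att K len * real (X i) - t_att K len * real (X (i - 1))\<bar> / T)))"

definition bin_entropy :: "real \<Rightarrow> real" where
  "bin_entropy x = - x * log 2 x - (1 - x) * log 2 (1 - x)"

definition SKF :: "nat \<Rightarrow> (nat \<Rightarrow> real) \<Rightarrow> real \<Rightarrow> real \<Rightarrow> nat set \<Rightarrow> real" where
  "SKF K len F T S =
     (let Q = (1 - E_w_e2e K len F T S) / 2 in max 0 (1 - bin_entropy Q - bin_entropy Q))"

definition SKR :: "nat \<Rightarrow> (nat \<Rightarrow> real) \<Rightarrow> real \<Rightarrow> real \<Rightarrow> nat set \<Rightarrow> real" where
  "SKR K len F T S = ent_rate K len * SKF K len F T S"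

text \<open>Edge lengths of the chain with nodes 1..M+N+1: edges 1..M-1 have fixed lengths d j,
  edge M-1+i (between nodes M+i-1 and M+i) has length l i, for i = 1..N+1.\<close>
definition chain_len :: "nat \<Rightarrow> (nat \<Rightarrow> real) \<Rightarrow> (nat \<Rightarrow> real) \<Rightarrow> nat \<Rightarrow> real" where
  "chain_len M d l j = (if j < M then d j else l (j + 1 - M))"

end

theory Submission
  imports Defs
begin

lemma ratio_mono:
  fixes v w :: real and n :: nat
  assumes "0 \<le> v" "v \<le> w" "w < 1" "n \<ge> 1"
  shows "(1 - v) * v^(n-1) / (1 - v^n) \<le> (1 - w) * w^(n-1) / (1 - w^n)"
proof -
  define S where "S x = (\<Sum>i<n. x^i)" for x :: real
  have eq: "(1 - x) * x^(n-1) / (1 - x^n) = x^(n-1) / S x" if "0 \<le> x" "x < 1" for x :: real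
  proof -
    have "1 - x^n = (1 - x) * S x" unfolding S_def by (rule one_diff_power_eq)
    moreover have "1 - x > 0" using that by simp
    ultimately show ?thesis by simp
  qed
  have Spos: "S x \<ge> 1" if "0 \<le> x" for x :: real
  proof -
    have "S x = 1 + (\<Sum>i\<in>{..<n}-{0}. x^i)" unfolding S_def
      using assms(4) by (subst sum.remove[of _ 0]) auto
    moreover have "(\<Sum>i\<in>{..<n}-{0}. x^i) \<ge> 0" using that by (intro sum_nonneg) auto
    ultimately show ?thesis by simp
  qed
  have key: "v^(n-1) * S w \<le> w^(n-1) * S v"
    unfolding S_def sum_distrib_left
  proof (rule sum_mono)
    fix i assume i: "i \<in> {..<n}"
    have "v^(n-1) * w^i = v^i * (v^(n-1-i) * w^i)"
      using i by (simp add: power_add[symmetric] mult.assoc)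
    also have "\<dots> \<le> v^i * (w^(n-1-i) * w^i)"
      using assms by (intro mult_left_mono mult_right_mono power_mono) auto
    also have "\<dots> = w^(n-1) * v^i"
      using i by (simp add: power_add[symmetric])
    finally show "v^(n-1) * w^i \<le> w^(n-1) * v^i" .
  qed
  have "v^(n-1) / S v \<le> w^(n-1) / S w"
    using key Spos[of v] Spos[of w] assms by (simp add: divide_simps mult.commute)
  then show ?thesis using eq[of v] eq[of w] assms by simp
qed


lemma psi_convex:
  fixes a :: real and n :: nat
  assumes a: "a > 0" and n: "n \<ge> 1"
  shows "convex_on {0..} (\<lambda>x. - ln (1 - (1 - exp (- a * x))^n))"
proof (rule convex_on_realI)
  show "connected {0::real..}" by simp
  have vb: "0 \<le> 1 - exp (- a * x) \<and> 1 - exp (- a * x) < 1" if "x \<ge> 0" for x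
    using a that by (auto simp: mult_nonneg_nonneg)
  have gpos: "(1 - exp (- a * x))^n < 1" if "x \<ge> 0" for x
  proof -
    have "(1 - exp (- a * x))^n < 1^n"
      using vb[OF that] n by (intro power_strict_mono) auto
    then show ?thesis by simp
  qed
  {
  fix x :: real assume x: "x \<in> {0..}"
  have d1: "((\<lambda>x. 1 - exp (- a * x)) has_real_derivative a * exp (- a * x)) (at x)"
    by (auto intro!: derivative_eq_intros)
  have d2: "((\<lambda>x. (1 - exp (- a * x))^n) has_real_derivative
       real n * (1 - exp (- a * x))^(n-1) * (a * exp (- a * x))) (at x)"
    using DERIV_power[OF d1, of n] by (simp add: mult_ac)
  have d3: "((\<lambda>x. 1 - (1 - exp (- a * x))^n) has_real_derivative
       - (real n * (1 - exp (- a * x))^(n-1) * (a * exp (- a * x)))) (at x)"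
    using DERIV_diff[OF DERIV_const d2] by simp
  have d4: "((\<lambda>x. ln (1 - (1 - exp (- a * x))^n)) has_real_derivative
       (- (real n * (1 - exp (- a * x))^(n-1) * (a * exp (- a * x)))) / (1 - (1 - exp (- a * x))^n)) (at x)"
    using DERIV_chain2[OF DERIV_ln d3] gpos[of x] x by (simp add: divide_simps)
  show "((\<lambda>x. - ln (1 - (1 - exp (- a * x))^n)) has_real_derivative
      (n * a * exp (- a * x) * (1 - exp (- a * x))^(n-1) / (1 - (1 - exp (- a * x))^n))) (at x)"
    using DERIV_minus[OF d4] by (simp add: field_simps)
  }
  fix x y :: real assume xy: "x \<in> {0..}" "y \<in> {0..}" "x \<le> y"
  have "(1 - (1 - exp (- a * x))) * (1 - exp (- a * x))^(n-1) / (1 - (1 - exp (- a * x))^n)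
       \<le> (1 - (1 - exp (- a * y))) * (1 - exp (- a * y))^(n-1) / (1 - (1 - exp (- a * y))^n)"
    using xy vb[of x] vb[of y] a n by (intro ratio_mono) auto
  then have "(n * a) * (exp (- a * x) * (1 - exp (- a * x))^(n-1) / (1 - (1 - exp (- a * x))^n))
       \<le> (n * a) * (exp (- a * y) * (1 - exp (- a * y))^(n-1) / (1 - (1 - exp (- a * y))^n))"
    using a by (intro mult_left_mono) auto
  then show "n * a * exp (- a * x) * (1 - exp (- a * x))^(n-1) / (1 - (1 - exp (- a * x))^n)
       \<le> n * a * exp (- a * y) * (1 - exp (- a * y))^(n-1) / (1 - (1 - exp (- a * y))^n)"
    by (simp add: mult.assoc)
qed


lemma jensen_prod:
  fixes a L :: real and n N :: nat and l :: "nat \<Rightarrow> real"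
  assumes a: "a > 0" and l: "\<forall>i\<in>{1..N+1}. l i \<ge> 0" and L: "(\<Sum>i=1..N+1. l i) = L"
  shows "(\<Prod>i=1..N+1. 1 - (1 - exp (- a * l i))^n)
          \<le> (1 - (1 - exp (- a * (L / real (N+1))))^n)^(N+1)"
proof (cases "n = 0")
  case True then show ?thesis by simp
next
  case False
  then have n: "n \<ge> 1" by simp
  define I where "I = {1..N+1}"
  have I: "finite I" "I \<noteq> {}" "card I = N+1" by (auto simp: I_def)
  define c where "c = 1 / real (N+1)"
  have c: "c > 0" "real (N+1) * c = 1" by (auto simp: c_def)
  define g where "g x = 1 - (1 - exp (- a * x))^n" for x
  have gpos: "g x > 0" if "x \<ge> 0" for x
  proof -
    have "(1 - exp (- a * x))^n < 1^n"
      using a that n by (intro power_strict_mono) (auto simp: mult_nonneg_nonneg)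
    then show ?thesis by (simp add: g_def)
  qed
  have lI: "\<forall>i\<in>I. l i \<ge> 0" using l by (simp add: I_def)
  have Lnn: "L \<ge> 0" unfolding L[symmetric] using l by (intro sum_nonneg) auto
  have "(\<lambda>x. - ln (g x)) (\<Sum>i\<in>I. c *\<^sub>R l i)
        \<le> (\<Sum>i\<in>I. c * (\<lambda>x. - ln (g x)) (l i))"
    using lI I c unfolding g_def by (intro convex_on_sum[OF _ _ psi_convex[OF a n]]) auto
  moreover have "(\<Sum>i\<in>I. c *\<^sub>R l i) = c * L"
    unfolding real_scaleR_def sum_distrib_left[symmetric] L[symmetric] I_def by simp
  moreover have "(\<Sum>i\<in>I. c * (\<lambda>x. - ln (g x)) (l i)) = - c * (\<Sum>i\<in>I. ln (g (l i)))"
    by (simp add: sum_distrib_left sum_negf)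
  ultimately have "- ln (g (c * L)) \<le> - c * (\<Sum>i\<in>I. ln (g (l i)))"
    by simp
  then have "c * (\<Sum>i\<in>I. ln (g (l i))) \<le> ln (g (c * L))" by simp
  then have "real (N+1) * (c * (\<Sum>i\<in>I. ln (g (l i)))) \<le> real (N+1) * ln (g (c * L))"
    by (intro mult_left_mono) auto
  then have le: "(\<Sum>i\<in>I. ln (g (l i))) \<le> real (N+1) * ln (g (c * L))"
    using c(2) by (simp only: mult.assoc[symmetric])
  have "(\<Prod>i\<in>I. g (l i)) = exp (\<Sum>i\<in>I. ln (g (l i)))"
    using lI gpos by (simp add: exp_sum[OF I(1)])
  also have "\<dots> \<le> exp (real (N+1) * ln (g (c * L)))"
    using le by simp
  also have "\<dots> = g (c * L)^(N+1)"
    using gpos[of "c * L"] Lnn c by (subst exp_of_nat_mult) simp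
  finally show ?thesis by (simp add: g_def c_def I_def)
qed


lemma p_succ_exp: "p_succ x = exp (- (ln 10 / 50) * x)"
  unfolding p_succ_def alpha_att_def powr_def by (simp add: field_simps)

lemma p_succ_bounds: "x \<ge> 0 \<Longrightarrow> 0 < p_succ x \<and> p_succ x \<le> 1"
  unfolding p_succ_exp by (auto simp: mult_nonneg_nonneg)

lemma geom_cdf:
  assumes "0 < p" "p \<le> 1"
  shows "measure_pmf.prob (map_pmf Suc (geometric_pmf p)) {..n} = 1 - (1 - p)^n"
proof -
  have "Suc -` {..n} = {..<n}" by auto
  then have "measure_pmf.prob (map_pmf Suc (geometric_pmf p)) {..n}
      = (\<Sum>k<n. (1 - p)^k * p)"
    using assms by (simp add: measure_measure_pmf_finite)
  also have "\<dots> = 1 - (1 - p)^n"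
    using one_diff_power_eq[of "1 - p" n] by (simp add: sum_distrib_right[symmetric])
  finally show ?thesis .
qed

lemma cdf_max:
  assumes K: "K \<ge> 1" and len: "\<forall>j\<in>{1..K}. len j \<ge> 0"
  shows "measure_pmf.prob (rounds_dist K len) {X. Max (X ` {1..K}) \<le> n}
       = (\<Prod>j\<in>{1..K}. 1 - (1 - p_succ (len j))^n)"
proof -
  have "{X. Max (X ` {1..K}) \<le> n} = Pi {1..K} (\<lambda>_. {..n})"
    using K by (auto simp: Pi_def)
  then have "measure_pmf.prob (rounds_dist K len) {X. Max (X ` {1..K}) \<le> n}
      = (\<Prod>j\<in>{1..K}. measure_pmf.prob (map_pmf Suc (geometric_pmf (p_succ (len j)))) {..n})"
    unfolding rounds_dist_def by (simp add: measure_Pi_pmf_Pi)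
  also have "\<dots> = (\<Prod>j\<in>{1..K}. 1 - (1 - p_succ (len j))^n)"
    using len p_succ_bounds by (intro prod.cong refl geom_cdf) auto
  finally show ?thesis .
qed

lemma nn_tail:
  fixes P :: "'a pmf" and Y :: "'a \<Rightarrow> nat"
  shows "(\<integral>\<^sup>+x. ennreal (real (Y x)) \<partial>P) = (\<Sum>n. ennreal (measure_pmf.prob P {x. n < Y x}))"
proof -
  have eq: "ennreal (real (Y x)) = (\<Sum>n. indicator {x. n < Y x} x)" for x
  proof -
    have "(\<Sum>n. indicator {x. n < Y x} x :: ennreal) = (\<Sum>n<Y x. indicator {x. n < Y x} x)"
      by (intro suminf_finite) auto
    also have "\<dots> = (\<Sum>n<Y x. 1)" by (intro sum.cong) auto
    finally show ?thesis by (simp add: ennreal_of_nat_eq_real_of_nat)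
  qed
  have "(\<integral>\<^sup>+x. ennreal (real (Y x)) \<partial>P) = (\<integral>\<^sup>+x. (\<Sum>n. indicator {x. n < Y x} x) \<partial>P)"
    by (simp add: eq)
  also have "\<dots> = (\<Sum>n. \<integral>\<^sup>+x. indicator {x. n < Y x} x \<partial>P)"
    by (intro nn_integral_suminf) auto
  also have "\<dots> = (\<Sum>n. ennreal (measure_pmf.prob P {x. n < Y x}))"
    by (simp add: measure_pmf.emeasure_eq_measure)
  finally show ?thesis .
qed


lemma split_prod_chain:
  assumes M: "M \<ge> 1"
  shows "(\<Prod>j\<in>{1..M+N}. F (chain_len M d l j))
       = (\<Prod>j\<in>{1..M-1}. F (d j)) * (\<Prod>i\<in>{1..N+1}. F (l i))"
proof -
  have U: "{1..M+N} = {1..M-1} \<union> {M..M+N}" using M by auto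
  have "(\<Prod>j\<in>{1..M+N}. F (chain_len M d l j))
      = (\<Prod>j\<in>{1..M-1}. F (chain_len M d l j)) * (\<Prod>j\<in>{M..M+N}. F (chain_len M d l j))"
    unfolding U by (rule prod.union_disjoint) auto
  also have "(\<Prod>j\<in>{1..M-1}. F (chain_len M d l j)) = (\<Prod>j\<in>{1..M-1}. F (d j))"
    by (intro prod.cong refl) (auto simp: chain_len_def)
  also have "{M..M+N} = {1 + (M-1)..(N+1) + (M-1)}" using M by auto
  also have "(\<Prod>j\<in>\<dots>. F (chain_len M d l j)) = (\<Prod>i\<in>{1..N+1}. F (chain_len M d l (i + (M-1))))"
    by (rule prod.shift_bounds_cl_nat_ivl)
  also have "\<dots> = (\<Prod>i\<in>{1..N+1}. F (l i))"
    using M by (intro prod.cong refl) (auto simp: chain_len_def)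
  finally show ?thesis .
qed

lemma cdf_compare:
  fixes M N :: nat and L :: real and d l :: "nat \<Rightarrow> real"
  assumes M: "M \<ge> 1"
    and d: "\<forall>j\<in>{1..M-1}. d j \<ge> 0"
    and l: "\<forall>i\<in>{1..N+1}. l i \<ge> 0"
    and L: "(\<Sum>i=1..N+1. l i) = L"
  shows "(\<Prod>j\<in>{1..M+N}. 1 - (1 - p_succ (chain_len M d l j))^n)
       \<le> (\<Prod>j\<in>{1..M+N}. 1 - (1 - p_succ (chain_len M d (\<lambda>_. L / real (N + 1)) j))^n)"
proof -
  have fnn: "0 \<le> 1 - (1 - p_succ x)^n" if "x \<ge> 0" for x
  proof -
    have "(1 - p_succ x)^n \<le> 1" using p_succ_bounds[OF that] by (intro power_le_one) auto
    then show ?thesis by simp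
  qed
  have "(\<Prod>i\<in>{1..N+1}. 1 - (1 - p_succ (l i))^n) \<le> (1 - (1 - p_succ (L / real (N+1)))^n)^(N+1)"
    unfolding p_succ_exp by (rule jensen_prod[OF _ l L]) simp
  also have "\<dots> = (\<Prod>i\<in>{1..N+1}. 1 - (1 - p_succ (L / real (N+1)))^n)" by simp
  finally have le: "(\<Prod>i\<in>{1..N+1}. 1 - (1 - p_succ (l i))^n) \<le> (\<Prod>i\<in>{1..N+1}. 1 - (1 - p_succ (L / real (N+1)))^n)" .
  have e1: "(\<Prod>j\<in>{1..M+N}. 1 - (1 - p_succ (chain_len M d l j))^n)
     = (\<Prod>j\<in>{1..M-1}. 1 - (1 - p_succ (d j))^n) * (\<Prod>i\<in>{1..N+1}. 1 - (1 - p_succ (l i))^n)"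
    by (rule split_prod_chain[OF M])
  have e2: "(\<Prod>j\<in>{1..M+N}. 1 - (1 - p_succ (chain_len M d (\<lambda>_. L / real (N + 1)) j))^n)
     = (\<Prod>j\<in>{1..M-1}. 1 - (1 - p_succ (d j))^n) * (\<Prod>i\<in>{1..N+1}. 1 - (1 - p_succ (L / real (N+1)))^n)"
    by (rule split_prod_chain[OF M])
  show ?thesis
    unfolding e1 e2
    using d fnn by (intro mult_left_mono le prod_nonneg) auto
qed


lemma chain_nonneg:
  assumes "\<forall>j\<in>{1..M-1}. d j \<ge> 0" "\<forall>i\<in>{1..N+1}. l i \<ge> 0"
  shows "\<forall>j\<in>{1..M+N}. chain_len M d l j \<ge> 0"
proof
  fix j assume j: "j \<in> {1..M+N}"
  show "chain_len M d l j \<ge> 0"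
  proof (cases "j < M")
    case True then show ?thesis using assms(1) j by (auto simp: chain_len_def)
  next
    case False
    then have "j + 1 - M \<in> {1..N+1}" using j by auto
    then show ?thesis using assms(2) False by (auto simp: chain_len_def)
  qed
qed

lemma tail_prob:
  assumes K: "K \<ge> 1" and len: "\<forall>j\<in>{1..K}. len j \<ge> 0"
  shows "measure_pmf.prob (rounds_dist K len) {X. n < Max (X ` {1..K})}
       = 1 - (\<Prod>j\<in>{1..K}. 1 - (1 - p_succ (len j))^n)"
proof -
  have "{X. n < Max (X ` {1..K})} = UNIV - {X. Max (X ` {1..K}) \<le> n}" by auto
  then show ?thesis
    using measure_pmf.prob_compl[of "{X. Max (X ` {1..K}) \<le> n}" "rounds_dist K len"] cdf_max[OF K len]
    by simp
qed

lemma expect_compare: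
  fixes K :: nat and len1 len2 :: "nat \<Rightarrow> real"
  assumes K: "K \<ge> 1" and l1: "\<forall>j\<in>{1..K}. len1 j \<ge> 0" and l2: "\<forall>j\<in>{1..K}. len2 j \<ge> 0"
    and cmp: "\<And>n. (\<Prod>j\<in>{1..K}. 1 - (1 - p_succ (len1 j))^n) \<le> (\<Prod>j\<in>{1..K}. 1 - (1 - p_succ (len2 j))^n)"
    and int1: "integrable (measure_pmf (rounds_dist K len1)) (\<lambda>X. real (Max (X ` {1..K})))"
  shows "integrable (measure_pmf (rounds_dist K len2)) (\<lambda>X. real (Max (X ` {1..K})))
    \<and> 1 \<le> measure_pmf.expectation (rounds_dist K len2) (\<lambda>X. real (Max (X ` {1..K})))
    \<and> measure_pmf.expectation (rounds_dist K len2) (\<lambda>X. real (Max (X ` {1..K})))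
       \<le> measure_pmf.expectation (rounds_dist K len1) (\<lambda>X. real (Max (X ` {1..K})))"
proof -
  define Y where "Y X = Max (X ` {1..K})" for X :: "nat \<Rightarrow> nat"
  define P1 where "P1 = rounds_dist K len1"
  define P2 where "P2 = rounds_dist K len2"
  define E1 where "E1 = measure_pmf.expectation P1 (\<lambda>X. real (Y X))"
  define E2 where "E2 = measure_pmf.expectation P2 (\<lambda>X. real (Y X))"
  have i1: "integrable (measure_pmf P1) (\<lambda>X. real (Y X))" using int1 by (simp add: P1_def Y_def)
  have nn1: "(\<integral>\<^sup>+X. ennreal (real (Y X)) \<partial>P1) = ennreal E1"
    unfolding E1_def by (rule nn_integral_eq_integral[OF i1]) auto
  have t1: "(\<integral>\<^sup>+X. ennreal (real (Y X)) \<partial>P1) = (\<Sum>n. ennreal (1 - (\<Prod>j\<in>{1..K}. 1 - (1 - p_succ (len1 j))^n)))"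
    unfolding nn_tail P1_def Y_def tail_prob[OF K l1] ..
  have t2: "(\<integral>\<^sup>+X. ennreal (real (Y X)) \<partial>P2) = (\<Sum>n. ennreal (1 - (\<Prod>j\<in>{1..K}. 1 - (1 - p_succ (len2 j))^n)))"
    unfolding nn_tail P2_def Y_def tail_prob[OF K l2] ..
  have le: "(\<integral>\<^sup>+X. ennreal (real (Y X)) \<partial>P2) \<le> (\<integral>\<^sup>+X. ennreal (real (Y X)) \<partial>P1)"
    unfolding t1 t2 using cmp by (intro suminf_le summableI ennreal_leI) auto
  have fin: "(\<integral>\<^sup>+X. ennreal (real (Y X)) \<partial>P2) < \<infinity>"
    using le nn1 by (simp add: le_less_trans)
  have i2: "integrable (measure_pmf P2) (\<lambda>X. real (Y X))"
    by (rule integrableI_nonneg) (use fin in auto)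
  have nn2: "(\<integral>\<^sup>+X. ennreal (real (Y X)) \<partial>P2) = ennreal E2"
    unfolding E2_def by (rule nn_integral_eq_integral[OF i2]) auto
  have E1nn: "E1 \<ge> 0" unfolding E1_def by (rule integral_nonneg_AE) auto
  have "ennreal E2 \<le> ennreal E1" using le nn1 nn2 by simp
  then have c1: "E2 \<le> E1" using E1nn by (simp add: ennreal_le_iff)
  have "ennreal (1 - (\<Prod>j\<in>{1..K}. 1 - (1 - p_succ (len2 j))^0)) \<le> (\<Sum>n. ennreal (1 - (\<Prod>j\<in>{1..K}. 1 - (1 - p_succ (len2 j))^n)))"
    using sum_le_suminf[of "\<lambda>n. ennreal (1 - (\<Prod>j\<in>{1..K}. 1 - (1 - p_succ (len2 j))^n))" "{0}"]
    by (simp add: summableI del: power_0)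
  moreover have "(\<Prod>j\<in>{1..K}. 1 - (1 - p_succ (len2 j))^0) = (0::real)"
    using K by (intro prod_zero bexI[of _ 1]) auto
  ultimately have "ennreal 1 \<le> ennreal E2" using t2 nn2 K by (simp add: power_0_left)
  then have c2: "1 \<le> E2" by (simp add: ennreal_le_iff)
  show ?thesis using i2 c1 c2 by (simp add: E1_def E2_def P1_def P2_def Y_def)
qed


lemma marginal:
  fixes f :: "('a \<Rightarrow> 'b) \<Rightarrow> real"
  assumes B: "finite B" and AB: "A \<subseteq> B"
    and fr: "\<And>X. f (\<lambda>x. if x \<in> A then X x else dflt) = f X"
    and pq: "\<And>x. x \<in> A \<Longrightarrow> p x = q x"
  shows "measure_pmf.expectation (Pi_pmf B dflt p) f = measure_pmf.expectation (Pi_pmf B dflt q) f"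
proof -
  have "measure_pmf.expectation (Pi_pmf B dflt p) f = measure_pmf.expectation (Pi_pmf A dflt p) f"
    unfolding Pi_pmf_subset[OF B AB] by (simp add: fr)
  also have "Pi_pmf A dflt p = Pi_pmf A dflt q" by (intro Pi_pmf_cong) (auto simp: pq)
  also have "measure_pmf.expectation (Pi_pmf A dflt q) f = measure_pmf.expectation (Pi_pmf B dflt q) f"
    unfolding Pi_pmf_subset[OF B AB] by (simp add: fr)
  finally show ?thesis .
qed

definition Hf :: "real \<Rightarrow> real \<Rightarrow> nat set \<Rightarrow> (nat \<Rightarrow> nat) \<Rightarrow> real" where
  "Hf T \<tau> S X = (\<Prod>i\<in>S. exp (- (\<tau> * \<bar>real (X i) - real (X (i - 1))\<bar>) / T))"

lemma Hf_bounds: "T > 0 \<Longrightarrow> \<tau> \<ge> 0 \<Longrightarrow> 0 \<le> Hf T \<tau> S X \<and> Hf T \<tau> S X \<le> 1"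
  unfolding Hf_def
  by (auto intro!: prod_nonneg prod_le_1 simp: mult_nonneg_nonneg)

lemma Hf_mono: "T > 0 \<Longrightarrow> 0 \<le> \<tau>2 \<Longrightarrow> \<tau>2 \<le> \<tau>1 \<Longrightarrow> Hf T \<tau>1 S X \<le> Hf T \<tau>2 S X"
  unfolding Hf_def
  by (intro prod_mono) (auto simp: divide_right_mono mult_right_mono)

lemma Ew_form:
  assumes "t_att K len \<ge> 0"
  shows "E_w_e2e K len F T S = w0 F ^ K * measure_pmf.expectation (rounds_dist K len) (Hf T (t_att K len) S)"
proof -
  have "\<bar>t_att K len * real (X i) - t_att K len * real (X (i - 1))\<bar>
      = t_att K len * \<bar>real (X i) - real (X (i - 1))\<bar>" for X :: "nat \<Rightarrow> nat" and i
    using assms by (simp add: right_diff_distrib[symmetric] abs_mult)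
  then show ?thesis unfolding E_w_e2e_def Hf_def by simp
qed


lemma bin_entropy_sym: "bin_entropy (1 - x) = bin_entropy x"
  unfolding bin_entropy_def by (simp add: algebra_simps)

lemma bin_entropy_nonneg: "0 \<le> x \<Longrightarrow> x \<le> 1 \<Longrightarrow> 0 \<le> bin_entropy x"
proof -
  assume x: "0 \<le> x" "x \<le> 1"
  have a: "x * log 2 x \<le> 0"
  proof (cases "x = 0")
    case False then have "log 2 x \<le> 0" using x by simp
    then show ?thesis using x by (simp add: mult_nonneg_nonpos)
  qed simp
  have b: "(1 - x) * log 2 (1 - x) \<le> 0"
  proof (cases "x = 1")
    case False then have "log 2 (1 - x) \<le> 0" using x by simp
    then show ?thesis using x by (simp add: mult_nonneg_nonpos)
  qed simp
  show ?thesis using a b unfolding bin_entropy_def by simp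
qed

lemma bin_entropy_mono:
  assumes "0 \<le> x" "x \<le> y" "y \<le> 1/2"
  shows "bin_entropy x \<le> bin_entropy y"
proof (cases "x = 0")
  case True
  then have "bin_entropy x = 0" by (simp add: bin_entropy_def)
  then show ?thesis using bin_entropy_nonneg[of y] assms by simp
next
  case False
  then have x0: "x > 0" using assms by simp
  show ?thesis
  proof (rule DERIV_nonneg_imp_nondecreasing[OF assms(2)])
    fix z assume z: "x \<le> z" "z \<le> y"
    then have z0: "0 < z" "z < 1" "z \<le> 1 - z" using x0 assms by auto
    have "(bin_entropy has_real_derivative (ln (1 - z) - ln z) / ln 2) (at z)"
    proof -
      have e: "bin_entropy = (\<lambda>z. (- z * ln z - (1 - z) * ln (1 - z)) / ln 2)"
        by (simp add: bin_entropy_def log_def fun_eq_iff diff_divide_distrib)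
      have d1: "((\<lambda>z. z * ln z) has_real_derivative (ln z + 1)) (at z)"
        using z0 by (auto intro!: derivative_eq_intros)
      have d2: "((\<lambda>z. (1 - z) * ln (1 - z)) has_real_derivative (- ln (1 - z) - 1)) (at z)"
        using z0 by (auto intro!: derivative_eq_intros)
      have "((\<lambda>z. - (z * ln z) - (1 - z) * ln (1 - z)) has_real_derivative (- (ln z + 1) - (- ln (1 - z) - 1))) (at z)"
        by (intro DERIV_diff DERIV_minus d1 d2)
      then have "((\<lambda>z. - z * ln z - (1 - z) * ln (1 - z)) has_real_derivative (ln (1 - z) - ln z)) (at z)"
        by simp
      then show ?thesis unfolding e by (rule DERIV_cdivide)
    qed
    moreover have "(ln (1 - z) - ln z) / ln 2 \<ge> 0"
      using z0 by (intro divide_nonneg_pos) auto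
    ultimately show "\<exists>y. (bin_entropy has_real_derivative y) (at z) \<and> 0 \<le> y" by blast
  qed
qed

definition skf_of :: "real \<Rightarrow> real" where
  "skf_of w = (let Q = (1 - w) / 2 in max 0 (1 - bin_entropy Q - bin_entropy Q))"

lemma skf_abs: "skf_of w = skf_of \<bar>w\<bar>"
proof (cases "w \<ge> 0")
  case False
  have "(1 - w) / 2 = 1 - (1 - \<bar>w\<bar>) / 2" using False by (simp add: field_simps)
  then show ?thesis unfolding skf_of_def Let_def using bin_entropy_sym by metis
qed simp

lemma skf_mono:
  assumes "\<bar>w1\<bar> \<le> \<bar>w2\<bar>" "\<bar>w2\<bar> \<le> 1"
  shows "skf_of w1 \<le> skf_of w2"
proof -
  have "bin_entropy ((1 - \<bar>w2\<bar>) / 2) \<le> bin_entropy ((1 - \<bar>w1\<bar>) / 2)"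
    using assms by (intro bin_entropy_mono) auto
  then have "skf_of \<bar>w1\<bar> \<le> skf_of \<bar>w2\<bar>"
    unfolding skf_of_def Let_def by simp
  then show ?thesis using skf_abs[of w1] skf_abs[of w2] by simp
qed

lemma skf_nonneg: "skf_of w \<ge> 0" unfolding skf_of_def Let_def by simp

lemma SKF_eq: "SKF K len F T S = skf_of (E_w_e2e K len F T S)"
  unfolding SKF_def skf_of_def ..


lemma max_l_ge_mean:
  fixes l :: "nat \<Rightarrow> real"
  assumes L: "(\<Sum>i=1..N+1. l i) = L"
  shows "\<exists>i\<in>{1..N+1}. L / real (N+1) \<le> l i"
proof (rule ccontr)
  assume "\<not> ?thesis"
  then have "\<forall>i\<in>{1..N+1}. l i < L / real (N+1)" by auto
  then have "(\<Sum>i=1..N+1. l i) < (\<Sum>i=1..N+1. L / real (N+1))"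
    by (intro sum_strict_mono) auto
  then show False using L by simp
qed

lemma tatt_facts:
  fixes M N :: nat and L :: real and d l :: "nat \<Rightarrow> real"
  assumes M: "M \<ge> 1"
    and l: "\<forall>i\<in>{1..N+1}. l i \<ge> 0"
    and L: "(\<Sum>i=1..N+1. l i) = L"
  shows "0 \<le> t_att (M+N) (chain_len M d (\<lambda>_. L / real (N + 1)))
    \<and> t_att (M+N) (chain_len M d (\<lambda>_. L / real (N + 1))) \<le> t_att (M+N) (chain_len M d l)
    \<and> (t_att (M+N) (chain_len M d (\<lambda>_. L / real (N + 1))) = 0 \<longrightarrow> t_att (M+N) (chain_len M d l) = 0)"
proof -
  define A where "A = {1..M+N}"
  define len1 where "len1 = chain_len M d l"
  define \<mu> where "\<mu> = L / real (N+1)"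
  define len2 where "len2 = chain_len M d (\<lambda>_. \<mu>)"
  have A: "finite A" "A \<noteq> {}" "M \<in> A" using M by (auto simp: A_def)
  have Lnn: "L \<ge> 0" unfolding L[symmetric] using l by (intro sum_nonneg) auto
  have mu: "\<mu> \<ge> 0" using Lnn by (simp add: \<mu>_def)
  have l2M: "len2 M = \<mu>" by (simp add: len2_def chain_len_def)
  obtain i where i: "i \<in> {1..N+1}" "\<mu> \<le> l i" using max_l_ge_mean[OF L] by (auto simp: \<mu>_def)
  have iA: "i + (M - 1) \<in> A" "len1 (i + (M - 1)) = l i"
    using i M by (auto simp: A_def len1_def chain_len_def)
  have le: "Max (len2 ` A) \<le> Max (len1 ` A)"
  proof (subst Max_le_iff)
    show "\<forall>a\<in>len2 ` A. a \<le> Max (len1 ` A)"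
    proof
      fix a assume "a \<in> len2 ` A"
      then obtain j where j: "j \<in> A" "a = len2 j" by auto
      show "a \<le> Max (len1 ` A)"
      proof (cases "j < M")
        case True
        then have "a = len1 j" using j by (simp add: len1_def len2_def chain_len_def)
        then show ?thesis using j A by (auto intro: Max_ge)
      next
        case False
        then have "a = \<mu>" using j by (simp add: len2_def chain_len_def)
        also have "\<dots> \<le> len1 (i + (M - 1))" using i iA by simp
        also have "\<dots> \<le> Max (len1 ` A)" using iA(1) A(1) by (intro Max_ge) auto
        finally show ?thesis .
      qed
    qed
  qed (use A in auto)
  have nn: "0 \<le> Max (len2 ` A)"
    using A l2M mu by (metis Max_ge finite_imageI image_eqI order_trans)
  have z: "Max (len1 ` A) = 0" if "Max (len2 ` A) = 0"
  proof -
    have "\<mu> \<le> 0" using that A l2M by (metis Max_ge finite_imageI image_eqI)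
    then have mu0: "\<mu> = 0" using mu by simp
    then have L0: "L = 0" by (simp add: \<mu>_def)
    have l0: "\<forall>i\<in>{1..N+1}. l i = 0"
      using L[unfolded L0] l by (subst (asm) sum_nonneg_eq_0_iff) auto
    have "Max (len1 ` A) \<le> 0"
    proof (subst Max_le_iff)
      show "\<forall>a\<in>len1 ` A. a \<le> 0"
      proof
        fix a assume "a \<in> len1 ` A"
        then obtain j where j: "j \<in> A" "a = len1 j" by auto
        show "a \<le> 0"
        proof (cases "j < M")
          case True
          then have "a = len2 j" using j by (simp add: len1_def len2_def chain_len_def)
          then show ?thesis using j A that by (metis Max_ge finite_imageI image_eqI)
        next
          case False
          then have "j + 1 - M \<in> {1..N+1}" using j by (auto simp: A_def)
          then show ?thesis using False j l0 by (simp add: len1_def chain_len_def)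
        qed
      qed
    qed (use A in auto)
    then show ?thesis using le that by simp
  qed
  show ?thesis
    using le nn z unfolding t_att_def A_def len1_def len2_def \<mu>_def
    by (auto simp: c_fib_def divide_right_mono)
qed


theorem mainTheorem6:
  fixes M N :: nat and F T L :: real and d l :: "nat \<Rightarrow> real"
  assumes "M \<ge> 1"
    and "0 \<le> F" and "F \<le> 1"
    and "T > 0"
    and "\<forall>j\<in>{1..M-1}. d j \<ge> 0"
    and "\<forall>i\<in>{1..N+1}. l i \<ge> 0"
    and "(\<Sum>i=1..N+1. l i) = L"
  shows "SKR (M + N) (chain_len M d l) F T {2..M-1}
           \<le> SKR (M + N) (chain_len M d (\<lambda>_. L / real (N + 1))) F T {2..M-1}"
proof -
  note M = assms(1) and F = assms(2,3) and T = assms(4) and d = assms(5) and l = assms(6) and L = assms(7)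
  define K where "K = M + N"
  define len1 where "len1 = chain_len M d l"
  define len2 where "len2 = chain_len M d (\<lambda>_. L / real (N + 1))"
  define S where "S = {2..M-1}"
  define \<tau>1 where "\<tau>1 = t_att K len1"
  define \<tau>2 where "\<tau>2 = t_att K len2"
  define Y where "Y X = real (Max (X ` {1..K}))" for X :: "nat \<Rightarrow> nat"
  have Yeq: "Y = (\<lambda>X. real (Max (X ` {1..K})))" by (simp add: Y_def fun_eq_iff)
  define P1 where "P1 = rounds_dist K len1"
  define P2 where "P2 = rounds_dist K len2"
  have K: "K \<ge> 1" using M by (simp add: K_def)
  have Lnn: "L \<ge> 0" unfolding L[symmetric] using l by (intro sum_nonneg) auto
  have l1n: "\<forall>j\<in>{1..K}. len1 j \<ge> 0" unfolding K_def len1_def by (rule chain_nonneg[OF d l])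
  have l2n: "\<forall>j\<in>{1..K}. len2 j \<ge> 0" unfolding K_def len2_def using Lnn by (intro chain_nonneg[OF d]) auto
  have tf: "0 \<le> \<tau>2 \<and> \<tau>2 \<le> \<tau>1 \<and> (\<tau>2 = 0 \<longrightarrow> \<tau>1 = 0)"
    unfolding \<tau>1_def \<tau>2_def K_def len1_def len2_def by (rule tatt_facts[OF M l L])
  have t2: "0 \<le> \<tau>2" and t12: "\<tau>2 \<le> \<tau>1" and t0: "\<tau>2 = 0 \<Longrightarrow> \<tau>1 = 0" using tf by auto
  have Hb: "\<And>\<tau> X. \<tau> \<ge> 0 \<Longrightarrow> 0 \<le> Hf T \<tau> S X \<and> Hf T \<tau> S X \<le> 1" using Hf_bounds T by blast
  have Hint: "\<And>\<tau> P. \<tau> \<ge> 0 \<Longrightarrow> integrable (measure_pmf P) (Hf T \<tau> S)"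
    by (rule measure_pmf.integrable_const_bound[where B=1]) (use Hb in auto)
  define e1 where "e1 = measure_pmf.expectation P1 (Hf T \<tau>1 S)"
  define e2 where "e2 = measure_pmf.expectation P2 (Hf T \<tau>2 S)"
  have w1: "E_w_e2e K len1 F T S = w0 F ^ K * e1"
    unfolding e1_def P1_def \<tau>1_def by (rule Ew_form) (use t2 t12 in \<open>simp add: \<tau>1_def\<close>)
  have w2: "E_w_e2e K len2 F T S = w0 F ^ K * e2"
    unfolding e2_def P2_def \<tau>2_def by (rule Ew_form) (use t2 in \<open>simp add: \<tau>2_def\<close>)
  have e1nn: "0 \<le> e1" unfolding e1_def using Hb t2 t12 by (intro integral_nonneg_AE) auto
  have "e1 \<le> measure_pmf.expectation P1 (Hf T \<tau>2 S)"
    unfolding e1_def using Hint t2 t12 Hf_mono[OF T t2 t12] by (intro integral_mono) auto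
  also have "\<dots> = e2"
    unfolding e2_def P1_def P2_def rounds_dist_def
  proof (rule marginal[where A="{1..M-1}"])
    show "finite {1..K}" by simp
    show "{1..M-1} \<subseteq> {1..K}" by (auto simp: K_def)
    show "Hf T \<tau>2 S (\<lambda>x. if x \<in> {1..M-1} then X x else 0) = Hf T \<tau>2 S X" for X
      unfolding Hf_def S_def by (intro prod.cong refl) auto
    show "map_pmf Suc (geometric_pmf (p_succ (len1 x))) = map_pmf Suc (geometric_pmf (p_succ (len2 x)))"
      if "x \<in> {1..M-1}" for x
      using that M by (auto simp: len1_def len2_def chain_len_def)
  qed
  finally have e12: "e1 \<le> e2" .
  have e2le: "e2 \<le> 1"
  proof -
    have "e2 \<le> measure_pmf.expectation P2 (\<lambda>_. 1::real)"
      unfolding e2_def using Hint Hb t2 by (intro integral_mono) auto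
    then show ?thesis by simp
  qed
  have w0b: "\<bar>w0 F\<bar> \<le> 1" using F by (simp add: w0_def abs_le_iff)
  have "\<bar>w0 F ^ K * e1\<bar> \<le> \<bar>w0 F ^ K * e2\<bar>"
    using e1nn e12 by (simp add: abs_mult mult_left_mono)
  moreover have "\<bar>w0 F ^ K * e2\<bar> \<le> 1"
    using e1nn e12 e2le w0b by (simp add: abs_mult power_abs mult_le_one power_le_one)
  ultimately have skf12: "SKF K len1 F T S \<le> SKF K len2 F T S"
    unfolding SKF_eq w1 w2 by (rule skf_mono)
  have skf1: "SKF K len1 F T S \<ge> 0" and skf2: "SKF K len2 F T S \<ge> 0"
    unfolding SKF_eq by (rule skf_nonneg)+
  have Y2nn: "0 \<le> measure_pmf.expectation P2 Y" unfolding Y_def by (intro integral_nonneg_AE) auto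
  have r2nn: "ent_rate K len2 \<ge> 0"
    unfolding ent_rate_def E_T_done_def using Y2nn t2
    by (simp add: \<tau>2_def P2_def Yeq)
  have main: "SKR K len1 F T S \<le> SKR K len2 F T S"
  proof (cases "integrable (measure_pmf P1) Y")
    case False
    then have "measure_pmf.expectation P1 Y = 0" by (rule not_integrable_integral_eq)
    then have "ent_rate K len1 = 0"
      unfolding ent_rate_def E_T_done_def by (simp add: P1_def Yeq)
    then show ?thesis unfolding SKR_def using r2nn skf2 by simp
  next
    case True
    have ec: "1 \<le> measure_pmf.expectation P2 Y \<and> measure_pmf.expectation P2 Y \<le> measure_pmf.expectation P1 Y"
      using expect_compare[OF K l1n l2n _ True[unfolded P1_def Y_def]]
        cdf_compare[OF M d l L] unfolding P1_def P2_def Y_def K_def len1_def len2_def by auto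
    show ?thesis
    proof (cases "\<tau>2 = 0")
      case True
      then have "\<tau>1 = 0" by (rule t0)
      then have "ent_rate K len1 = 0" unfolding ent_rate_def E_T_done_def by (simp add: \<tau>1_def)
      then show ?thesis unfolding SKR_def using r2nn skf2 by simp
    next
      case False
      then have t2p: "\<tau>2 > 0" using t2 by simp
      have pos: "0 < \<tau>2 * measure_pmf.expectation P2 Y" using t2p ec by simp
      have "\<tau>2 * measure_pmf.expectation P2 Y \<le> \<tau>1 * measure_pmf.expectation P1 Y"
        using ec t2 t12 by (intro mult_mono) auto
      then have "1 / (\<tau>1 * measure_pmf.expectation P1 Y) \<le> 1 / (\<tau>2 * measure_pmf.expectation P2 Y)"
        using pos by (intro divide_left_mono) auto
      then have r12: "ent_rate K len1 \<le> ent_rate K len2"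
        unfolding ent_rate_def E_T_done_def by (simp add: \<tau>1_def \<tau>2_def P1_def P2_def Yeq)
      show ?thesis unfolding SKR_def using r12 skf12 r2nn skf1 by (intro mult_mono) auto
    qed
  qed
  then show ?thesis by (simp add: K_def len1_def len2_def S_def)
qed

end
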